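(* Let $R[x,y]$ be a relation with $n$ tuples whose vectors $(x,y)$ have $\ell_2$ norm at most $B$. Let $\widehat{E[X]}=\frac1n\sum_{t\in R}t[x]$, $\widehat{E[X^2]}=\frac1n\sum_{t\in R}t[x]^2$, $\widehat{\sigma^2_x}=\widehat{E[X^2]}-\widehat{E[X]}^2$, and let $\widetilde{E[X]}=\widehat{E[X]}+e_1$, $\widetilde{E[X^2]}=\widehat{E[X^2]}+e_2$ with $e_1,e_2\sim\mathcal N(0,\sigma^2/n^2)$, where $\sigma=\sqrt{2\ln(1.25/\delta)}\,\Delta/\epsilon$ with $\Delta=O(B^2)$, and $\widetilde{\sigma^2_x}=\widetilde{E[X^2]}-\widetilde{E[X]}^2$. Then, in the asymptotic regime $n,B\to\infty$ and $\epsilon,\delta,p\to0$, with probability at least $1-p$, $$|\widehat{\sigma^2_x}-\widetilde{\sigma^2_x}|=O\!\left(\frac{B^4\ln(1/\delta)\ln(1/p)}{\epsilon^2 n}\right).$$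
   Context: Here $e_1,e_2$ are the Gaussian noises added (after normalization by $n$) to the aggregated monomials $\sum x$ and $\sum x^2$ by a Gaussian mechanism with sensitivity $\Delta$; the probability is over this noise, and $\epsilon,\delta\in(0,1]$. *)

theory Defs
  imports "HOL-Probability.Probability"
begin

text \<open>A relation R[x,y] with n tuples is a list of pairs (x,y) of length n.\<close>

definition mean_x :: "(real \<times> real) list \<Rightarrow> real" where
  "mean_x R = (\<Sum>t\<leftarrow>R. fst t) / real (length R)"

definition sqmean_x :: "(real \<times> real) list \<Rightarrow> real" where
  "sqmean_x R = (\<Sum>t\<leftarrow>R. (fst t)\<^sup>2) / real (length R)"

definition var_hat :: "(real \<times> real) list \<Rightarrow> real" where
  "var_hat R = sqmean_x R - (mean_x R)\<^sup>2"

definition var_tilde :: "(real \<times> real) list \<Rightarrow> real \<Rightarrow> real \<Rightarrow> real" where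
  "var_tilde R e1 e2 = (sqmean_x R + e2) - (mean_x R + e1)\<^sup>2"

definition gauss_sigma :: "real \<Rightarrow> real \<Rightarrow> real \<Rightarrow> real" where
  "gauss_sigma eps delta Delta = sqrt (2 * ln (1.25 / delta)) * Delta / eps"

end

theory Submission imports Defs begin

lemma fact_ratio_bound: "(fact (2*k) :: real) \<le> fact k * (2 * real k) ^ k"
proof -
  have d: "fact k dvd (fact (2*k) :: nat)" by (rule fact_dvd) simp
  have le: "fact (2*k) div fact k \<le> (2*k) ^ k"
    using fact_div_fact_le_pow[of k "2*k"] by simp
  have "(fact (2*k) :: nat) = fact k * (fact (2*k) div fact k)" using d by simp
  also have "\<dots> \<le> fact k * (2*k)^k" using le by simp
  finally have "(fact (2*k) :: nat) \<le> fact k * (2*k)^k" .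
  then have "real (fact (2*k)) \<le> real (fact k * (2*k)^k)" by linarith
  then show ?thesis by (simp add: of_nat_fact)
qed

lemma gauss_tail:
  assumes P: "prob_space M" and D: "distributed M lborel X (normal_density 0 s)"
    and s: "0 < s" and t: "0 < t" and k: "1 \<le> k"
  shows "measure M {\<omega>\<in>space M. t \<le> \<bar>X \<omega>\<bar>} \<le> (real k * s\<^sup>2 / t\<^sup>2) ^ k"
proof -
  interpret prob_space M by (rule P)
  have Xm[measurable]: "X \<in> borel_measurable M"
    using distributed_measurable[OF D] by simp
  have int0: "integrable lborel (\<lambda>x. normal_density 0 s x * x ^ (2*k))"
    using integrable_normal_moment[OF s, of 0 "2*k"] by simp
  have int: "integrable M (\<lambda>\<omega>. X \<omega> ^ (2*k))"
    using distributed_integrable[OF D, of "\<lambda>x. x ^ (2*k)"] int0 by simp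
  have eqI: "(\<integral>\<omega>. X \<omega> ^ (2*k) \<partial>M) = fact (2*k) / ((2 / s\<^sup>2)^k * fact k)"
    using distributed_integral[OF D, of "\<lambda>x. x ^ (2*k)"] integral_normal_moment_even[OF s, of 0 k]
    by simp
  have set_eq: "{\<omega>\<in>space M. t \<le> \<bar>X \<omega>\<bar>} = {\<omega>\<in>space M. t ^ (2*k) \<le> X \<omega> ^ (2*k)}"
  proof -
    have "t \<le> \<bar>x\<bar> \<longleftrightarrow> t ^ (2*k) \<le> x ^ (2*k)" for x :: real
    proof -
      have "x ^ (2*k) = \<bar>x\<bar> ^ (2*k)" by (simp add: power_even_abs)
      moreover have "t ^ (2*k) \<le> \<bar>x\<bar> ^ (2*k) \<longleftrightarrow> t \<le> \<bar>x\<bar>"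
        using t k by (intro power_mono_iff) auto
      ultimately show ?thesis by simp
    qed
    then show ?thesis by auto
  qed
  have "measure M {\<omega>\<in>space M. t ^ (2*k) \<le> X \<omega> ^ (2*k)} \<le> (\<integral>\<omega>. X \<omega> ^ (2*k) \<partial>M) / t ^ (2*k)"
    using t by (intro integral_Markov_inequality_measure[OF int, of "space M"])
      (auto simp: power_mult)
  also have "\<dots> = fact (2*k) / ((2 / s\<^sup>2)^k * fact k) / t ^ (2*k)" using eqI by simp
  also have "\<dots> \<le> fact k * (2 * real k) ^ k / ((2 / s\<^sup>2)^k * fact k) / t ^ (2*k)"
    using fact_ratio_bound[of k] s t by (intro divide_right_mono) auto
  also have "\<dots> = (2 * real k) ^ k / ((2 / s\<^sup>2)^k * (t\<^sup>2) ^ k)"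
    by (simp add: power_mult)
  also have "\<dots> = (2 * real k / ((2 / s\<^sup>2) * t\<^sup>2)) ^ k"
    by (simp add: power_divide power_mult_distrib)
  also have "2 * real k / ((2 / s\<^sup>2) * t\<^sup>2) = real k * s\<^sup>2 / t\<^sup>2"
    using s t by (simp add: field_simps)
  finally show ?thesis using set_eq by simp
qed

lemma sum_fst_bound:
  assumes "\<forall>t\<in>set R. \<bar>fst t\<bar> \<le> (B::real)"
  shows "\<bar>\<Sum>t\<leftarrow>R. fst t\<bar> \<le> real (length R) * B"
  using assms
proof (induction R)
  case Nil then show ?case by simp
next
  case (Cons a R)
  then have "\<bar>fst a\<bar> \<le> B" "\<bar>\<Sum>t\<leftarrow>R. fst t\<bar> \<le> real (length R) * B" by auto
  then show ?case by (simp add: algebra_simps)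
qed

lemma mean_bound:
  assumes "\<forall>t\<in>set R. sqrt ((fst t)\<^sup>2 + (snd t)\<^sup>2) \<le> B" "length R > 0"
  shows "\<bar>mean_x R\<bar> \<le> B"
proof -
  have "\<forall>t\<in>set R. \<bar>fst t\<bar> \<le> B"
  proof
    fix t assume "t \<in> set R"
    then have "sqrt ((fst t)\<^sup>2 + (snd t)\<^sup>2) \<le> B" using assms by auto
    moreover have "\<bar>fst t\<bar> = sqrt ((fst t)\<^sup>2)" by simp
    moreover have "sqrt ((fst t)\<^sup>2) \<le> sqrt ((fst t)\<^sup>2 + (snd t)\<^sup>2)" by simp
    ultimately show "\<bar>fst t\<bar> \<le> B" by linarith
  qed
  then have "\<bar>\<Sum>t\<leftarrow>R. fst t\<bar> \<le> real (length R) * B" by (rule sum_fst_bound)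
  then show ?thesis
  proof -
    have np: "0 < real (length R)" using assms(2) by simp
    have "\<bar>(\<Sum>t\<leftarrow>R. fst t) / real (length R)\<bar> = \<bar>\<Sum>t\<leftarrow>R. fst t\<bar> / real (length R)"
      using np by (simp add: abs_divide)
    also have "\<dots> \<le> B" using np \<open>\<bar>\<Sum>t\<leftarrow>R. fst t\<bar> \<le> real (length R) * B\<close>
      by (simp add: divide_le_eq mult.commute)
    finally show ?thesis by (simp add: mean_x_def)
  qed
qed

lemma det_part:
  fixes m e1 e2 t B :: real
  assumes "\<bar>m\<bar> \<le> B" "\<bar>e1\<bar> < t" "\<bar>e2\<bar> < t"
  shows "\<bar>(q - m\<^sup>2) - ((q + e2) - (m + e1)\<^sup>2)\<bar> \<le> 2 * B * t + t\<^sup>2 + t"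
proof -
  have eq: "(q - m\<^sup>2) - ((q + e2) - (m + e1)\<^sup>2) = 2 * m * e1 + e1\<^sup>2 - e2"
    by (simp add: power2_eq_square algebra_simps)
  have "\<bar>2 * m * e1\<bar> \<le> 2 * B * t"
    using assms by (simp add: abs_mult) (intro mult_mono, auto)
  moreover have "e1\<^sup>2 \<le> t\<^sup>2"
  proof -
    have "e1\<^sup>2 = \<bar>e1\<bar>\<^sup>2" by simp
    also have "\<dots> \<le> t\<^sup>2" using assms(2) by (intro power_mono) auto
    finally show ?thesis .
  qed
  moreover have "0 \<le> e1\<^sup>2" by simp
  ultimately show ?thesis unfolding eq using assms(3) by (smt (verit))
qed

theorem lemma1:
  fixes cD :: real
  assumes "cD > 0"
  shows "\<exists>C>0. \<exists>(N0::nat) (B0::real) \<epsilon>0 \<delta>0 p0. \<epsilon>0 > 0 \<and> \<delta>0 > 0 \<and> p0 > 0 \<and>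
    (\<forall>(n::nat) (B::real) (\<epsilon>::real) (\<delta>::real) (p::real) (\<Delta>::real)
       (R::(real \<times> real) list) (M::'a measure) (e1::'a \<Rightarrow> real) (e2::'a \<Rightarrow> real).
      n \<ge> N0 \<and> B \<ge> B0 \<and> 0 < \<epsilon> \<and> \<epsilon> \<le> 1 \<and> \<epsilon> \<le> \<epsilon>0 \<and>
      0 < \<delta> \<and> \<delta> \<le> 1 \<and> \<delta> \<le> \<delta>0 \<and> 0 < p \<and> p \<le> p0 \<and>
      0 < \<Delta> \<and> \<Delta> \<le> cD * B\<^sup>2 \<and>
      length R = n \<and> (\<forall>t\<in>set R. sqrt ((fst t)\<^sup>2 + (snd t)\<^sup>2) \<le> B) \<and>
      prob_space M \<and>
      distributed M lborel e1 (normal_density 0 (gauss_sigma \<epsilon> \<delta> \<Delta> / real n)) \<and>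
      distributed M lborel e2 (normal_density 0 (gauss_sigma \<epsilon> \<delta> \<Delta> / real n)) \<and>
      prob_space.indep_var M borel e1 borel e2
      \<longrightarrow> measure M {\<omega> \<in> space M. \<bar>var_hat R - var_tilde R (e1 \<omega>) (e2 \<omega>)\<bar>
              \<le> C * B ^ 4 * ln (1 / \<delta>) * ln (1 / p) / (\<epsilon>\<^sup>2 * real n)} \<ge> 1 - p)"
proof -
  define C where "C = 24 * cD + 64 * cD\<^sup>2 + 1"
  have Cpos: "C > 0" unfolding C_def using assms by (simp add: add_pos_nonneg)
  show ?thesis
  proof (rule exI[of _ C], rule conjI[OF Cpos], rule exI[of _ "1::nat"], rule exI[of _ "1::real"],
      rule exI[of _ "1::real"], rule exI[of _ "1/3::real"], rule exI[of _ "1/3::real"],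
      intro conjI allI impI)
    fix n :: nat and B \<epsilon> \<delta> p \<Delta> :: real and R :: "(real \<times> real) list" and M :: "'a measure"
      and e1 e2 :: "'a \<Rightarrow> real"
    assume H: "1 \<le> n \<and> 1 \<le> B \<and> 0 < \<epsilon> \<and> \<epsilon> \<le> 1 \<and> \<epsilon> \<le> 1 \<and>
      0 < \<delta> \<and> \<delta> \<le> 1 \<and> \<delta> \<le> 1/3 \<and> 0 < p \<and> p \<le> 1/3 \<and>
      0 < \<Delta> \<and> \<Delta> \<le> cD * B\<^sup>2 \<and>
      length R = n \<and> (\<forall>t\<in>set R. sqrt ((fst t)\<^sup>2 + (snd t)\<^sup>2) \<le> B) \<and>
      prob_space M \<and>
      distributed M lborel e1 (normal_density 0 (gauss_sigma \<epsilon> \<delta> \<Delta> / real n)) \<and>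
      distributed M lborel e2 (normal_density 0 (gauss_sigma \<epsilon> \<delta> \<Delta> / real n)) \<and>
      prob_space.indep_var M borel e1 borel e2"
    then have n1: "1 \<le> n" and B1: "1 \<le> B" and ep: "0 < \<epsilon>" "\<epsilon> \<le> 1"
      and dl: "0 < \<delta>" "\<delta> \<le> 1/3" and pp: "0 < p" "p \<le> 1/3"
      and Dl: "0 < \<Delta>" "\<Delta> \<le> cD * B\<^sup>2" and len: "length R = n"
      and RB: "\<forall>t\<in>set R. sqrt ((fst t)\<^sup>2 + (snd t)\<^sup>2) \<le> B"
      and P: "prob_space M"
      and D1: "distributed M lborel e1 (normal_density 0 (gauss_sigma \<epsilon> \<delta> \<Delta> / real n))"
      and D2: "distributed M lborel e2 (normal_density 0 (gauss_sigma \<epsilon> \<delta> \<Delta> / real n))"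
      by auto
    interpret prob_space M by (rule P)
    define Ld where "Ld = ln (1 / \<delta>)"
    define Lp where "Lp = ln (1 / p)"
    have ln3: "1 \<le> ln (3::real)"
      using exp_le by (subst ln_ge_iff) auto
    have "3 \<le> 1/\<delta>" using dl by (simp add: field_simps)
    then have "ln 3 \<le> ln (1/\<delta>)" by (intro ln_mono) auto
    then have Ld1: "1 \<le> Ld" unfolding Ld_def using ln3 by linarith
    have "3 \<le> 1/p" using pp by (simp add: field_simps)
    then have "ln 3 \<le> ln (1/p)" by (intro ln_mono) auto
    then have Lp1: "1 \<le> Lp" unfolding Lp_def using ln3 by linarith
    have nr: "real n \<ge> 1" using n1 by simp
    define s where "s = gauss_sigma \<epsilon> \<delta> \<Delta> / real n"
    have l125: "ln (1.25 / \<delta>) = ln 1.25 + Ld" unfolding Ld_def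
      using ln_div[of "1.25" \<delta>] ln_div[of 1 \<delta>] dl by simp
    have lnA: "ln (1.25::real) \<le> 1" using ln_le_minus_one[of "1.25::real"] by simp
    have lnB: "0 \<le> ln (1.25::real)" by (rule ln_ge_zero) simp
    have l125b1: "ln (1.25 / \<delta>) \<le> 2 * Ld" using l125 Ld1 lnA lnB by linarith
    have l125b2: "0 < ln (1.25 / \<delta>)" using l125 Ld1 lnA lnB by linarith
    note l125b = l125b1 l125b2
    have spos: "0 < s" unfolding s_def gauss_sigma_def using l125b ep Dl nr by simp
    have s2: "s\<^sup>2 = 2 * ln (1.25 / \<delta>) * \<Delta>\<^sup>2 / (\<epsilon>\<^sup>2 * (real n)\<^sup>2)"
      unfolding s_def gauss_sigma_def using l125b
      by (simp add: power_divide power_mult_distrib)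
    have D2b: "\<Delta>\<^sup>2 \<le> cD\<^sup>2 * B ^ 4"
    proof -
      have "\<Delta>\<^sup>2 \<le> (cD * B\<^sup>2)\<^sup>2" using Dl by (intro power_mono) auto
      then show ?thesis by (simp add: power_mult_distrib power2_eq_square[of B] power4_eq_xxxx)
    qed
    have s2b: "s\<^sup>2 \<le> 4 * Ld * cD\<^sup>2 * B ^ 4 / (\<epsilon>\<^sup>2 * (real n)\<^sup>2)"
    proof -
      have "2 * ln (1.25 / \<delta>) * \<Delta>\<^sup>2 \<le> 2 * (2 * Ld) * (cD\<^sup>2 * B ^ 4)"
        using l125b D2b by (intro mult_mono) auto
      then show ?thesis unfolding s2 using ep nr
        by (intro divide_right_mono) (auto simp: algebra_simps)
    qed
    define k where "k = nat \<lceil>Lp\<rceil>"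
    have cc: "of_int \<lceil>Lp\<rceil> - 1 < Lp \<and> Lp \<le> of_int \<lceil>Lp\<rceil>" by (rule ceiling_correct)
    have cpos: "0 \<le> \<lceil>Lp\<rceil>" using cc Lp1 by linarith
    have kr: "real k = of_int \<lceil>Lp\<rceil>" unfolding k_def using cpos by simp
    have k1: "1 \<le> k" using kr cc Lp1 by linarith
    have kle: "real k \<le> 2 * Lp" using kr cc Lp1 by linarith
    have kge: "Lp \<le> real k" using kr cc by linarith
    define a where "a = B\<^sup>2 * sqrt (Ld * Lp) / (\<epsilon> * real n)"
    define t where "t = 8 * cD * a"
    have "1 * 1 \<le> Ld * Lp" using Ld1 Lp1 by (intro mult_mono) auto
    then have sq1: "1 \<le> sqrt (Ld * Lp)" by simp
    have apos: "0 < a" unfolding a_def using B1 ep nr sq1 by simp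
    have tpos: "0 < t" unfolding t_def using apos assms by simp
    have t2: "t\<^sup>2 = 64 * cD\<^sup>2 * B ^ 4 * Ld * Lp / (\<epsilon>\<^sup>2 * (real n)\<^sup>2)"
      unfolding t_def a_def using Ld1 Lp1
      by (simp add: power_mult_distrib power_divide power2_eq_square[of B] power4_eq_xxxx)
    have ratio: "real k * s\<^sup>2 / t\<^sup>2 \<le> 1/8"
    proof -
      have "real k * s\<^sup>2 \<le> (2 * Lp) * (4 * Ld * cD\<^sup>2 * B ^ 4 / (\<epsilon>\<^sup>2 * (real n)\<^sup>2))"
        using kle s2b by (intro mult_mono) auto
      also have "\<dots> = t\<^sup>2 / 8" unfolding t2 by simp
      finally show ?thesis using tpos by (simp add: divide_le_eq)
    qed
    have tail: "(real k * s\<^sup>2 / t\<^sup>2) ^ k \<le> p / 2"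
    proof -
      have "(real k * s\<^sup>2 / t\<^sup>2) ^ k \<le> (1/8) ^ k"
        using ratio spos tpos by (intro power_mono) auto
      also have "(1/8::real) ^ k = (1/2) ^ k * (1/4) ^ k" by (simp add: power_mult_distrib[symmetric])
      also have "\<dots> \<le> (1/2) * exp (-1) ^ k"
      proof (intro mult_mono power_mono)
        show "(1/2::real) ^ k \<le> 1/2" using power_decreasing[OF k1, of "1/2::real"] by simp
        have "exp (1::real) \<le> 4" using exp_le by simp
        then show "(1/4::real) \<le> exp (-1)" by (simp add: exp_minus field_simps)
      qed auto
      also have "exp (-1) ^ k = exp (- real k)" by (simp add: exp_of_nat_mult[symmetric])
      also have "exp (- real k) \<le> exp (- Lp)" using kge by simp
      also have "exp (- Lp) = p" unfolding Lp_def using pp by (simp add: ln_div)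
      finally show ?thesis by simp
    qed
    have m1[measurable]: "e1 \<in> borel_measurable M" using distributed_measurable[OF D1] by simp
    have m2[measurable]: "e2 \<in> borel_measurable M" using distributed_measurable[OF D2] by simp
    define E1 where "E1 = {\<omega>\<in>space M. t \<le> \<bar>e1 \<omega>\<bar>}"
    define E2 where "E2 = {\<omega>\<in>space M. t \<le> \<bar>e2 \<omega>\<bar>}"
    have pE1: "prob E1 \<le> p / 2" unfolding E1_def
      using gauss_tail[OF P D1[folded s_def] spos tpos k1] tail by linarith
    have pE2: "prob E2 \<le> p / 2" unfolding E2_def
      using gauss_tail[OF P D2[folded s_def] spos tpos k1] tail by linarith
    have E1s: "E1 \<in> events" unfolding E1_def by measurable
    have E2s: "E2 \<in> events" unfolding E2_def by measurable
    define T where "T = B ^ 4 * Ld * Lp / (\<epsilon>\<^sup>2 * real n)"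
    define S where "S = {\<omega> \<in> space M. \<bar>var_hat R - var_tilde R (e1 \<omega>) (e2 \<omega>)\<bar>
              \<le> C * B ^ 4 * ln (1 / \<delta>) * ln (1 / p) / (\<epsilon>\<^sup>2 * real n)}"
    have Ss: "S \<in> events" unfolding S_def var_tilde_def by measurable
    have mB: "\<bar>mean_x R\<bar> \<le> B" using mean_bound[OF RB] len n1 by simp
    define w where "w = B * sqrt (Ld * Lp) / \<epsilon>"
    have "1 * 1 \<le> B * sqrt (Ld * Lp)" using B1 sq1 by (intro mult_mono) auto
    also have "B * sqrt (Ld * Lp) \<le> B * sqrt (Ld * Lp) / \<epsilon>" using ep B1 sq1
      by (simp add: le_divide_eq)
    finally have w1: "1 \<le> w" unfolding w_def by simp
    have aw: "a = B * w / real n" unfolding a_def w_def by (simp add: power2_eq_square)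
    have Tw: "T = B\<^sup>2 * w\<^sup>2 / real n" unfolding T_def w_def using Ld1 Lp1 ep
      by (simp add: power_mult_distrib power_divide power2_eq_square[of B] power4_eq_xxxx)
    have Ba: "B * a \<le> T"
    proof -
      have "B * a = B\<^sup>2 * w / real n" unfolding aw by (simp add: power2_eq_square)
      also have "\<dots> \<le> B\<^sup>2 * w\<^sup>2 / real n"
        using w1 nr by (intro divide_right_mono mult_left_mono) (auto simp: power2_eq_square)
      finally show ?thesis unfolding Tw .
    qed
    have aBa: "a \<le> B * a" using B1 apos by simp
    have a2: "a\<^sup>2 \<le> T"
    proof -
      have "a\<^sup>2 = T / real n" unfolding aw Tw by (simp add: power_mult_distrib power_divide power2_eq_square)
      also have "\<dots> \<le> T / 1" using nr Tw by (intro divide_left_mono) auto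
      finally show ?thesis by simp
    qed
    have Tnn: "0 \<le> T" unfolding Tw by simp
    have bound: "2 * B * t + t\<^sup>2 + t \<le> C * T"
    proof -
      have "2 * B * t = 16 * cD * (B * a)" unfolding t_def by simp
      also have "\<dots> \<le> 16 * cD * T" using Ba assms by simp
      finally have 1: "2 * B * t \<le> 16 * cD * T" .
      have "t\<^sup>2 = 64 * cD\<^sup>2 * a\<^sup>2" unfolding t_def by (simp add: power_mult_distrib)
      also have "\<dots> \<le> 64 * cD\<^sup>2 * T" using a2 by (intro mult_left_mono) auto
      finally have 2: "t\<^sup>2 \<le> 64 * cD\<^sup>2 * T" .
      have "t \<le> 8 * cD * T" unfolding t_def using aBa Ba assms by simp
      with 1 2 show ?thesis unfolding C_def using Tnn by (simp add: algebra_simps)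
    qed
    have sub: "space M - S \<subseteq> E1 \<union> E2"
    proof
      fix \<omega> assume w: "\<omega> \<in> space M - S"
      show "\<omega> \<in> E1 \<union> E2"
      proof (rule ccontr)
        assume "\<omega> \<notin> E1 \<union> E2"
        then have "\<bar>e1 \<omega>\<bar> < t" "\<bar>e2 \<omega>\<bar> < t" using w unfolding E1_def E2_def by auto
        from det_part[OF mB this, of "sqmean_x R"] bound
        have "\<bar>var_hat R - var_tilde R (e1 \<omega>) (e2 \<omega>)\<bar> \<le> C * T"
          unfolding var_hat_def var_tilde_def by linarith
        then have "\<omega> \<in> S" using w unfolding S_def T_def Ld_def Lp_def by simp
        with w show False by simp
      qed
    qed
    have "prob (space M - S) \<le> prob (E1 \<union> E2)"
      using sub E1s E2s by (intro finite_measure_mono) auto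
    also have "\<dots> \<le> prob E1 + prob E2" using E1s E2s by (rule measure_Un_le)
    finally have "prob (space M - S) \<le> p" using pE1 pE2 by linarith
    moreover have "prob (space M - S) = 1 - prob S" using Ss by (rule prob_compl)
    ultimately have "measure M S \<ge> 1 - p" by linarith
    then show "measure M {\<omega> \<in> space M. \<bar>var_hat R - var_tilde R (e1 \<omega>) (e2 \<omega>)\<bar>
              \<le> C * B ^ 4 * ln (1 / \<delta>) * ln (1 / p) / (\<epsilon>\<^sup>2 * real n)} \<ge> 1 - p"
      unfolding S_def .
  qed simp_all
qed

end
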